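(* Let $t\geq 1$ be an integer, $m=8t+4$ and $n=2^m+1$, and let $x$ be an odd integer. Then: (1) if $1\leq x\leq 2^{4t+2}-1$, $x$ is a coset leader; (2) if $2^{4t+2}+3\leq x\leq 2^{4t+3}-5$, $x$ is a coset leader; (3) if $2^{4t+3}+5\leq x\leq 2^{4t+3}+2^{4t+1}-3$, $x$ is a coset leader; (4) if $2^{4t+3}+2^{4t+1}+3\leq x\leq 2^{4t+3}+2^{4t+2}-3$, $x$ is a coset leader; (5) if $2^{4t+3}+2^{4t+2}+5\leq x\leq 2^{4t+3}+2^{4t+2}+2^{4t+1}-3$, $x$ is a coset leader; (6) if $x=2^{4t+2}+1$, or $2^{4t+3}-3\leq x\leq 2^{4t+3}+3$, or $2^{4t+3}+2^{4t+1}-1\leq x\leq 2^{4t+3}+2^{4t+1}+1$, or $2^{4t+3}+2^{4t+2}-1\leq x\leq 2^{4t+3}+2^{4t+2}+3$, or $2^{4t+3}+2^{4t+2}+2^{4t+1}-1\leq x\leq 2^{4t+3}+2^{4t+2}+2^{4t+1}+1$, then $x$ is not a coset leader.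
   Context: For $n=2^m+1$ and an integer $x$, the 2-cyclotomic coset of $x$ modulo $n$ is $C_x=\{x\cdot 2^{j} \bmod n : j\geq 0\}\subseteq\{0,1,\dots,n-1\}$. For $0\leq x\leq n-1$, "$x$ is a coset leader" means that $x$ is the smallest element of $C_x$. *)

theory Defs
  imports Main
begin

definition cyclotomic_coset :: "nat \<Rightarrow> nat \<Rightarrow> nat set" where
  "cyclotomic_coset n x = {x * 2 ^ j mod n | j. True}"

definition coset_leader :: "nat \<Rightarrow> nat \<Rightarrow> bool" where
  "coset_leader n x \<longleftrightarrow> x \<le> n - 1 \<and> (\<forall>y \<in> cyclotomic_coset n x. x \<le> y)"

end

theory Submission
  imports Defs
begin


lemma mod_formula:
  fixes x P Q N :: nat
  assumes "P * Q = N" "x div P \<le> (x mod P) * Q" "0 < P"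
  shows "x * Q mod (N+1) = (x mod P) * Q - x div P"
proof -
  have x: "x = x div P * P + x mod P" by simp
  have "x * Q = x div P * N + x mod P * Q" using assms(1)
    by (metis x add_mult_distrib mult.assoc)
  hence e: "x*Q = x div P*(N+1) + (x mod P*Q - x div P)" using assms(2) by simp
  have "x mod P * Q \<le> P * Q" using assms(3) by (simp add: less_imp_le_nat)
  hence "x mod P*Q - x div P < N+1" using assms(1) by linarith
  then show ?thesis unfolding e mod_mult_self3 by simp
qed

lemma neg:
  fixes y N :: nat
  assumes "y mod (N+1) \<noteq> 0"
  shows "(y * N) mod (N+1) = (N+1) - y mod (N+1)"
proof -
  define A where "A = (y*N) mod (N+1)"
  define r where "r = y mod (N+1)"
  have "(A + r) mod (N+1) = (y*N + y) mod (N+1)" unfolding A_def r_def by (simp add: mod_add_eq)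
  also have "y*N + y = y*(N+1)" by simp
  finally have "(A + r) mod (N+1) = y*(N+1) mod (N+1)" .
  moreover have "y*(N+1) mod (N+1) = 0" by (rule mod_mult_self2_is_0)
  ultimately have "(A + r) mod (N+1) = 0" by (rule trans)
  hence "(N+1) dvd (A + r)" by (simp add: dvd_eq_mod_eq_0)
  then obtain k where k: "A + r = (N+1)*k" by blast
  have "A < N+1" "r < N+1" "r > 0" using assms unfolding A_def r_def by auto
  hence "(N+1)*k < (N+1)*2" unfolding k[symmetric] by simp
  hence "k < 2" by (simp only: mult_less_cancel1)
  moreover have "k \<noteq> 0" proof assume "k = 0" thus False using k \<open>r > 0\<close> by simp qed
  ultimately have "k = 1" by simp
  with k show ?thesis unfolding A_def r_def by simp
qed

lemma c2:
  fixes x H M :: nat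
  assumes H: "even H" "16 \<le> H" and M: "M = H*H" and x: "odd x" "x \<le> 14*H+1"
    and bad: "x \<noteq> 8*H+1" "x \<noteq> 10*H+1" "x \<noteq> 12*H+1" "x \<noteq> 14*H+1"
       "x \<noteq> 10*H-1" "x \<noteq> 12*H-1" "x \<noteq> 14*H-1"
  shows "x \<le> x*(8*H) mod (16*M+1) \<and> x*(8*H) mod (16*M+1) + x \<le> 16*M+1"
proof -
  define q c where "q = x div (2*H)" and "c = x mod (2*H)"
  have xe0: "x = 2*H*q + c" unfolding q_def c_def by simp
  have xe: "x = 2*(H*q) + c" using xe0 by simp
  have cl: "c < 2*H" unfolding c_def using H by simp
  have q8: "q < 8"
  proof (rule ccontr)
    assume "\<not> q < 8"
    hence "2*H*8 \<le> 2*H*q" by (intro mult_le_mono2) simp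
    thus False using xe0 x H by linarith
  qed
  have oc: "odd c" using x xe by simp
  have HH: "16*H \<le> M" unfolding M using H by (intro mult_le_mono1) 
  have cc: "c = 1 \<or> c = 2*H-1 \<or> (3 \<le> c \<and> c \<le> 2*H-3)" using oc cl H by presburger
  have mf: "x*(8*H) mod (16*M+1) = 8*(c*H) - q"
  proof -
    have "x*(8*H) mod (16*M+1) = c*(8*H) - q"
    unfolding c_def q_def
    proof (rule mod_formula)
      show "2*H*(8*H) = 16*M" by (simp add: M)
      show "0 < 2*H" using H by simp
      have "1 \<le> c" using oc by presburger
      hence "8*H \<le> c*(8*H)" by simp
      thus "x div (2*H) \<le> x mod (2*H) * (8*H)" using q8 H unfolding q_def c_def by linarith
    qed
    thus ?thesis by (simp add: algebra_simps)
  qed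
  have qs: "q = 0 \<or> q = 1 \<or> q = 2 \<or> q = 3 \<or> q = 4 \<or> q = 5 \<or> q = 6 \<or> q = 7" using q8 by linarith
  have Hq: "q \<le> k \<Longrightarrow> H*q \<le> k*H" for k by (simp add: mult.commute)
  from cc show ?thesis
  proof (elim disjE conjE)
    assume c: "c = 1"
    have "q \<le> 3" using qs xe0 bad(1-4) unfolding c by (elim disjE; simp)
    hence "H*q \<le> 3*H" by (rule Hq)
    then show ?thesis unfolding mf using xe H HH \<open>q \<le> 3\<close> unfolding c by (intro conjI) linarith+
  next
    assume c: "c = 2*H-1"
    have e: "c*H = 2*M - H" unfolding c M by (simp add: diff_mult_distrib algebra_simps)
    have "q \<le> 3" using qs xe0 bad(5-7) H x(2) unfolding c by (elim disjE; simp; linarith?)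
    hence "H*q \<le> 3*H" by (rule Hq)
    then show ?thesis unfolding mf e using xe H HH \<open>q \<le> 3\<close> unfolding c by (intro conjI) linarith+
  next
    assume c: "3 \<le> c" "c \<le> 2*H-3"
    have l: "3*H \<le> c*H" "c \<le> c*H" using c H by simp_all
    have u: "c*H \<le> (2*H-3)*H" using c by (intro mult_le_mono1)
    have u2: "(2*H-3)*H = 2*M - 3*H" unfolding M using H by (simp add: diff_mult_distrib algebra_simps)
    have "H*q \<le> 7*H" using q8 by (intro Hq) simp
    then show ?thesis unfolding mf using q8 xe H HH l u u2 c by (intro conjI) linarith+
  qed
qed

lemma c4:
  fixes x H M :: nat
  assumes H: "even H" "16 \<le> H" and M: "M = H*H" and x: "odd x" "x \<le> 14*H+1"
    and bad: "x \<noteq> 4*H+1" "x \<noteq> 8*H+1" "x \<noteq> 12*H+1" "x \<noteq> 12*H+3"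
       "x \<noteq> 8*H-1" "x \<noteq> 12*H-1"
  shows "x \<le> x*(4*H) mod (16*M+1) \<and> x*(4*H) mod (16*M+1) + x \<le> 16*M+1"
proof -
  define q c where "q = x div (4*H)" and "c = x mod (4*H)"
  have xe0: "x = 4*H*q + c" unfolding q_def c_def by simp
  have xe: "x = 4*(H*q) + c" using xe0 by simp
  have cl: "c < 4*H" unfolding c_def using H by simp
  have q4: "q < 4"
  proof (rule ccontr)
    assume "\<not> q < 4"
    hence "4*H*4 \<le> 4*H*q" by (intro mult_le_mono2) simp
    thus False using xe0 x H by linarith
  qed
  have oc: "odd c" using x xe by simp
  have HH: "16*H \<le> M" unfolding M using H by (intro mult_le_mono1) 
  have cc: "c = 1 \<or> c = 3 \<or> c = 4*H-1 \<or> c = 4*H-3 \<or> (5 \<le> c \<and> c \<le> 4*H-5)"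
    using oc cl H by presburger
  have mf: "x*(4*H) mod (16*M+1) = 4*(c*H) - q"
  proof -
    have "x*(4*H) mod (16*M+1) = c*(4*H) - q"
    unfolding c_def q_def
    proof (rule mod_formula)
      show "4*H*(4*H) = 16*M" by (simp add: M)
      show "0 < 4*H" using H by simp
      have "1 \<le> c" using oc by presburger
      hence "4*H \<le> c*(4*H)" by simp
      thus "x div (4*H) \<le> x mod (4*H) * (4*H)" using q4 H unfolding q_def c_def by linarith
    qed
    thus ?thesis by (simp add: algebra_simps)
  qed
  have qs: "q = 0 \<or> q = 1 \<or> q = 2 \<or> q = 3" using q4 by linarith
  have Hq: "q \<le> k \<Longrightarrow> H*q \<le> k*H" for k by (simp add: mult.commute)
  from cc show ?thesis
  proof (elim disjE conjE)
    assume c: "c = 1"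
    have "q = 0" using qs xe0 bad(1-3) unfolding c by (elim disjE; simp)
    then show ?thesis unfolding mf using xe H HH unfolding c by simp
  next
    assume c: "c = 3"
    have "q \<le> 2" using qs xe0 bad(4) unfolding c by (elim disjE; simp)
    hence "H*q \<le> 2*H" by (rule Hq)
    then show ?thesis unfolding mf using xe H HH \<open>q \<le> 2\<close> unfolding c by (intro conjI) linarith+
  next
    assume c: "c = 4*H-1"
    have e: "c*H = 4*M - H" unfolding c M by (simp add: diff_mult_distrib algebra_simps)
    have "q = 0" using qs xe0 bad(5-6) H x(2) unfolding c by (elim disjE; simp; linarith?)
    hence "H*q = 0" by simp
    then show ?thesis unfolding mf e using xe H HH \<open>q = 0\<close> unfolding c by (intro conjI) linarith+
  next
    assume c: "c = 4*H-3"
    have e: "c*H = 4*M - 3*H" unfolding c M by (simp add: diff_mult_distrib algebra_simps)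
    have "q \<le> 2" using qs xe0 H x(2) unfolding c by (elim disjE; simp; linarith?)
    hence "H*q \<le> 2*H" by (rule Hq)
    then show ?thesis unfolding mf e using xe H HH \<open>q \<le> 2\<close> unfolding c by (intro conjI) linarith+
  next
    assume c: "5 \<le> c" "c \<le> 4*H-5"
    have l: "5*H \<le> c*H" "c \<le> c*H" using c H by simp_all
    have u: "c*H \<le> (4*H-5)*H" using c by (intro mult_le_mono1)
    have u2: "(4*H-5)*H = 4*M - 5*H" unfolding M using H by (simp add: diff_mult_distrib algebra_simps)
    have "H*q \<le> 3*H" using q4 by (intro Hq) simp
    then show ?thesis unfolding mf using q4 xe H HH l u u2 c by (intro conjI) linarith+
  qed
qed

lemma c8:
  fixes x H M :: nat
  assumes H: "even H" "16 \<le> H" and M: "M = H*H" and x: "odd x" "x \<le> 14*H+1"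
    and bad: "x \<noteq> 8*H+1" "x \<noteq> 8*H+3" "x \<noteq> 8*H-1" "x \<noteq> 8*H-3"
  shows "x \<le> x*(2*H) mod (16*M+1) \<and> x*(2*H) mod (16*M+1) + x \<le> 16*M+1"
proof -
  define q c where "q = x div (8*H)" and "c = x mod (8*H)"
  have xe0: "x = 8*H*q + c" unfolding q_def c_def by simp
  have xe: "x = 8*(H*q) + c" using xe0 by simp
  have cl: "c < 8*H" unfolding c_def using H by simp
  have q2: "q < 2"
  proof (rule ccontr)
    assume "\<not> q < 2"
    hence "8*H*2 \<le> 8*H*q" by (intro mult_le_mono2) simp
    thus False using xe0 x H by linarith
  qed
  have oc: "odd c" using x xe by simp
  have HH: "16*H \<le> M" unfolding M using H by (intro mult_le_mono1) 
  have cc: "c = 1 \<or> c = 3 \<or> c = 8*H-1 \<or> c = 8*H-3 \<or> (5 \<le> c \<and> c \<le> 8*H-5)"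
    using oc cl H by presburger
  have mf: "x*(2*H) mod (16*M+1) = 2*(c*H) - q"
  proof -
    have "x*(2*H) mod (16*M+1) = c*(2*H) - q"
    unfolding c_def q_def
    proof (rule mod_formula)
      show "8*H*(2*H) = 16*M" by (simp add: M)
      show "0 < 8*H" using H by simp
      have "1 \<le> c" using oc by presburger
      hence "2*H \<le> c*(2*H)" by simp
      thus "x div (8*H) \<le> x mod (8*H) * (2*H)" using q2 H unfolding q_def c_def by linarith
    qed
    thus ?thesis by (simp add: algebra_simps)
  qed
  have qs: "q = 0 \<or> q = 1" using q2 by linarith
  from cc show ?thesis
  proof (elim disjE conjE)
    assume c: "c = 1"
    have "q = 0" using qs xe0 bad(1) unfolding c by (elim disjE; simp)
    then show ?thesis unfolding mf using xe H HH unfolding c by simp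
  next
    assume c: "c = 3"
    have "q = 0" using qs xe0 bad(2) unfolding c by (elim disjE; simp)
    then show ?thesis unfolding mf using xe H HH unfolding c by simp
  next
    assume c: "c = 8*H-1"
    have False using qs xe0 bad(3) H x(2) unfolding c by (elim disjE; simp; linarith?)
    then show ?thesis ..
  next
    assume c: "c = 8*H-3"
    have False using qs xe0 bad(4) H x(2) unfolding c by (elim disjE; simp; linarith?)
    then show ?thesis ..
  next
    assume c: "5 \<le> c" "c \<le> 8*H-5"
    have l: "5*(H-1) \<le> c*(H-1)" using c by (intro mult_le_mono1)
    have l2: "c*(H-1) + c = c*H" using H by (simp add: diff_mult_distrib algebra_simps)
    have l3: "5*H \<le> c*H" using c by simp
    from qs show ?thesis
    proof (elim disjE)
      assume q: "q = 0"
      have u: "c*H \<le> (8*H-5)*H" using c by (intro mult_le_mono1)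
      have u2: "(8*H-5)*H = 8*M - 5*H" unfolding M using H by (simp add: diff_mult_distrib algebra_simps)
      show ?thesis unfolding mf using xe H HH l l2 l3 u u2 c q by simp
    next
      assume q: "q = 1"
      have "c \<le> 6*H+1" using xe x q by simp
      hence u: "c*H \<le> (6*H+1)*H" by (intro mult_le_mono1)
      have u2: "(6*H+1)*H = 6*M + H" unfolding M by (simp add: algebra_simps)
      have "H*q = H" using q by simp
      then show ?thesis unfolding mf using xe H HH l l2 l3 u u2 c q by (intro conjI) linarith+
    qed
  qed
qed



lemma small:
  fixes x P Q H M :: nat
  assumes PQ: "P*Q = 16*M" and M: "M = H*H" and P: "2 \<le> P" "P \<le> H" "even P"
    and x: "odd x" "x \<le> 14*H+1" and H: "16 \<le> H"
  shows "x \<le> x*Q mod (16*M+1) \<and> x*Q mod (16*M+1) + x \<le> 16*M+1"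
proof -
  define q c where "q = x div P" and "c = x mod P"
  have xe: "x = q*P + c" unfolding q_def c_def by simp
  have c1: "1 \<le> c"
  proof (rule ccontr)
    assume "\<not> 1 \<le> c"
    hence "P dvd x" unfolding c_def by (simp add: dvd_eq_mod_eq_0)
    with P(3) have "even x" by (metis dvd_trans)
    with x show False by simp
  qed
  have "c < P" unfolding c_def using P by simp
  hence cP: "c + 1 \<le> P" by simp
  have "(x+q)*P = x*P + q*P" by (simp add: algebra_simps)
  also have "\<dots> \<le> x*P + x" using xe by simp
  also have "\<dots> = x*(P+1)" by simp
  also have "\<dots> \<le> (14*H+1)*(H+1)" using x P by (intro mult_le_mono) simp_all
  also have "\<dots> = 14*M + 15*H + 1" unfolding M by (simp add: algebra_simps)
  also have "\<dots> \<le> 16*M" proof -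
    have "16*H \<le> M" unfolding M using H by (intro mult_le_mono1)
    thus ?thesis using H by linarith
  qed
  finally have "(x+q)*P \<le> Q*P" using PQ by (simp add: mult.commute)
  hence xq: "x + q \<le> Q" using P by simp
  have "Q \<le> c*Q" using c1 by simp
  have cQ: "(c+1)*Q \<le> P*Q" using cP by (intro mult_le_mono1)
  have mf: "x*Q mod (16*M+1) = c*Q - q" unfolding c_def q_def
  proof (rule mod_formula[OF PQ])
    show "0 < P" using P by simp
    show "x div P \<le> x mod P * Q" using xq \<open>Q \<le> c*Q\<close> unfolding q_def c_def by linarith
  qed
  have "(c+1)*Q = c*Q + Q" by simp
  then show ?thesis unfolding mf using xq \<open>Q \<le> c*Q\<close> cQ PQ by (intro conjI) linarith+
qed

lemma large:
  fixes x P Q H M :: nat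
  assumes PQ: "P*Q = 16*M" and M: "M = H*H" and P: "16*H \<le> P"
    and x: "1 \<le> x" "x \<le> 14*H+1" and H: "16 \<le> H"
  shows "x \<le> x*Q mod (16*M+1) \<and> x*Q mod (16*M+1) + x \<le> 16*M+1"
proof -
  have "16*H*Q \<le> P*Q" using P by (intro mult_le_mono1)
  also have "\<dots> = 16*H*H" using PQ M by simp
  finally have QH: "Q \<le> H" using H by simp
  have "0 < Q" using PQ M H by (cases Q) auto
  have "x*(Q+1) \<le> (14*H+1)*(H+1)" using x QH by (intro mult_le_mono) simp_all
  also have "\<dots> = 14*M + 15*H + 1" unfolding M by (simp add: algebra_simps)
  also have "\<dots> \<le> 16*M" proof -
    have "16*H \<le> M" unfolding M using H by (intro mult_le_mono1)
    thus ?thesis using H by linarith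
  qed
  finally have b: "x*Q + x \<le> 16*M" by (simp add: algebra_simps)
  hence "x*Q mod (16*M+1) = x*Q" by simp
  moreover have "x \<le> x*Q" using \<open>0 < Q\<close> by simp
  ultimately show ?thesis using b by simp
qed

lemma all_j:
  fixes x n N m :: nat
  assumes N: "2^m = N" and n: "n = N+1" and x: "1 \<le> x" and m: "0 < m"
    and B: "\<forall>i<m. x \<le> x*2^i mod n \<and> x*2^i mod n + x \<le> n"
  shows "x \<le> x*2^j mod n \<and> x*2^j mod n + x \<le> n"
proof (induction j rule: less_induct)
  case (less j)
  show ?case
  proof (cases "j < m")
    case True thus ?thesis using B by blast
  next
    case False
    then have j: "j = (j-m) + m" by simp
    have IH: "x \<le> x*2^(j-m) mod n \<and> x*2^(j-m) mod n + x \<le> n" using less.IH[of "j-m"] m False by simp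
    have e: "x*2^j = x*2^(j-m) * N" using j N by (metis power_add mult.assoc)
    have ne: "x*2^(j-m) mod (N+1) \<noteq> 0" using IH x n by auto
    have "x*2^j mod n = n - x*2^(j-m) mod n" unfolding e n by (rule neg[OF ne])
    then show ?thesis using IH by linarith
  qed
qed

lemma leader_of:
  fixes x n N m :: nat
  assumes N: "2^m = N" and n: "n = N+1" and x: "1 \<le> x" and m: "0 < m"
    and B: "\<forall>i<m. x \<le> x*2^i mod n \<and> x*2^i mod n + x \<le> n"
  shows "coset_leader n x"
proof -
  have b0: "x \<le> x mod n" "x mod n + x \<le> n" using B m by auto
  have "x mod n \<le> x" by simp
  hence "x \<le> n - 1" using b0 x by linarith
  moreover have "\<forall>y \<in> cyclotomic_coset n x. x \<le> y"
    unfolding cyclotomic_coset_def using all_j[OF assms] by auto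
  ultimately show ?thesis unfolding coset_leader_def by blast
qed

lemma not_leader:
  assumes "x*2^j mod n < x" shows "\<not> coset_leader n x"
proof
  assume L: "coset_leader n x"
  have "x*2^j mod n \<in> cyclotomic_coset n x" unfolding cyclotomic_coset_def by blast
  with L have "x \<le> x*2^j mod n" unfolding coset_leader_def by blast
  with assms show False by simp
qed

lemma nl_direct:
  fixes x k v M i :: nat
  assumes "x*2^i = k*(16*M+1) + v" "v < x" "v < 16*M+1"
  shows "\<not> coset_leader (16*M+1) x"
proof (rule not_leader[of x i])
  have "x*2^i mod (16*M+1) = v" unfolding assms(1) mod_mult_self3 using assms(3) by simp
  thus "x*2^i mod (16*M+1) < x" using assms(2) by simp
qed

lemma nl_upper:
  fixes x k r M i m :: nat
  assumes N: "2^m = 16*M" and "x*2^i = k*(16*M+1) + r" "16*M+1 < x + r" "0 < r" "r < 16*M+1"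
  shows "\<not> coset_leader (16*M+1) x"
proof (rule not_leader[of x "i+m"])
  have r: "x*2^i mod (16*M+1) = r" unfolding assms(2) mod_mult_self3 using assms(5) by simp
  have e: "x*2^(i+m) = x*2^i*(16*M)" using N by (simp add: power_add)
  have "x*2^(i+m) mod (16*M+1) = 16*M+1 - r" unfolding e using neg[of "x*2^i" "16*M"] r assms(4) by simp
  thus "x*2^(i+m) mod (16*M+1) < x" using assms(3,5) by linarith
qed



lemma Hfacts:
  fixes t H :: nat
  assumes t: "1 \<le> t" and H: "H = 2^(4*t)"
  shows "16 \<le> H" "even H" "2^(4*t+1) = 2*H" "2^(4*t+2) = 4*H" "2^(4*t+3) = 8*H"
    "2^(4*t+4) = 16*H" "2^(8*t+4) = 16*(H*H)"
proof -
  have "(2::nat)^4 \<le> 2^(4*t)" using t by (intro power_increasing) simp_all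
  thus "16 \<le> H" using H by simp
  show "even H" using H t by simp
  show "2^(4*t+1) = 2*H" "2^(4*t+2) = 4*H" "2^(4*t+3) = 8*H" "2^(4*t+4) = 16*H"
    using H by (simp_all add: power_add)
  have "(2::nat)^(8*t+4) = 2^(4*t+4*t+4)" by (simp add: algebra_simps)
  also have "\<dots> = 2^(4*t) * 2^(4*t) * 2^4" by (simp only: power_add)
  finally have "(2::nat)^(8*t+4) = 2^(4*t) * 2^(4*t) * 2^4" .
  thus "2^(8*t+4) = 16*(H*H)" using H by simp
qed

lemma bounds_all:
  fixes t H M x :: nat
  assumes t: "1 \<le> t" and H: "H = 2^(4*t)" and M: "M = H*H" and x: "odd x" "1 \<le> x" "x \<le> 14*H+1"
    and bad: "x \<noteq> 4*H+1" "x \<noteq> 8*H-3" "x \<noteq> 8*H-1" "x \<noteq> 8*H+1" "x \<noteq> 8*H+3"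
      "x \<noteq> 10*H-1" "x \<noteq> 10*H+1" "x \<noteq> 12*H-1" "x \<noteq> 12*H+1" "x \<noteq> 12*H+3"
      "x \<noteq> 14*H-1" "x \<noteq> 14*H+1"
  shows "\<forall>i<8*t+4. x \<le> x*2^i mod (16*M+1) \<and> x*2^i mod (16*M+1) + x \<le> 16*M+1"
proof (intro allI impI)
  fix i assume i: "i < 8*t+4"
  note HF = Hfacts[OF t H]
  define s where "s = 8*t+4 - i"
  have si: "s + i = 8*t+4" using i s_def by simp
  have PQ: "2^s * 2^i = 16*M" using HF(7) M si by (metis power_add)
  consider "s \<le> 4*t" | "s = 4*t+1" | "s = 4*t+2" | "s = 4*t+3" | "4*t+4 \<le> s" by linarith
  then show "x \<le> x*2^i mod (16*M+1) \<and> x*2^i mod (16*M+1) + x \<le> 16*M+1"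
  proof cases
    case 1
    have "(2::nat)^s \<le> 2^(4*t)" using 1 by (intro power_increasing) simp_all
    hence P1: "2^s \<le> H" using H by simp
    have s1: "1 \<le> s" using s_def i by simp
    have "(2::nat)^1 \<le> 2^s" using s1 by (intro power_increasing) simp_all
    hence P2: "2 \<le> (2::nat)^s" by simp
    have P3: "even ((2::nat)^s)" using s1 by simp
    show ?thesis by (rule small[OF PQ M P2 P1 P3 x(1) x(3) HF(1)])
  next
    case 2
    hence "i = 4*t+3" using si by simp
    hence "2^i = 8*H" using HF by simp
    thus ?thesis using c2[OF HF(2) HF(1) M x(1) x(3)] bad by simp
  next
    case 3
    hence "i = 4*t+2" using si by simp
    hence "2^i = 4*H" using HF by simp
    thus ?thesis using c4[OF HF(2) HF(1) M x(1) x(3)] bad by simp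
  next
    case 4
    hence "i = 4*t+1" using si by simp
    hence "2^i = 2*H" using HF by simp
    thus ?thesis using c8[OF HF(2) HF(1) M x(1) x(3)] bad by simp
  next
    case 5
    have "(2::nat)^(4*t+4) \<le> 2^s" using 5 by (intro power_increasing) simp_all
    hence P: "16*H \<le> 2^s" using HF by simp
    show ?thesis by (rule large[OF PQ M P x(2) x(3) HF(1)])
  qed
qed

lemma leader_main:
  fixes t H M x :: nat
  assumes t: "1 \<le> t" and H: "H = 2^(4*t)" and M: "M = H*H" and x: "odd x" "1 \<le> x" "x \<le> 14*H+1"
    and bad: "x \<noteq> 4*H+1" "x \<noteq> 8*H-3" "x \<noteq> 8*H-1" "x \<noteq> 8*H+1" "x \<noteq> 8*H+3"
      "x \<noteq> 10*H-1" "x \<noteq> 10*H+1" "x \<noteq> 12*H-1" "x \<noteq> 12*H+1" "x \<noteq> 12*H+3"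
      "x \<noteq> 14*H-1" "x \<noteq> 14*H+1"
  shows "coset_leader (16*M+1) x"
proof (rule leader_of[of "8*t+4" "16*M"])
  show "2^(8*t+4) = 16*M" using Hfacts(7)[OF t H] M by simp
  show "\<forall>i<8*t+4. x \<le> x*2^i mod (16*M+1) \<and> x*2^i mod (16*M+1) + x \<le> 16*M+1"
    by (rule bounds_all[OF assms])
qed (use x in auto)



lemma nl_0:
  fixes t H M :: nat
  assumes t: "1 \<le> t" and H: "H = 2^(4*t)" and M: "M = H*H"
  shows "\<not> coset_leader (16*M+1) (4*H+1)"
proof -
  note HF = Hfacts[OF t H]
  have HM: "16*H \<le> M" unfolding M using HF(1) by (intro mult_le_mono1)
  have e0: "(4*H+1)*(4*H) = 16*M + 4*H" using HF(1) unfolding M by (simp add: algebra_simps diff_mult_distrib)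
  have e: "(4*H+1)*2^(4*t+2) = 16*M + 4*H" using e0 HF(4) by simp
  show ?thesis
    apply (rule nl_direct[where i="4*t+2" and k=1 and v="4*H-1"])
    apply (subst e) using HF(1) HM apply simp
    using HF(1) HM apply linarith+
    done
qed

lemma nl_1:
  fixes t H M :: nat
  assumes t: "1 \<le> t" and H: "H = 2^(4*t)" and M: "M = H*H"
  shows "\<not> coset_leader (16*M+1) (8*H+1)"
proof -
  note HF = Hfacts[OF t H]
  have HM: "16*H \<le> M" unfolding M using HF(1) by (intro mult_le_mono1)
  have e0: "(8*H+1)*(2*H) = 16*M + 2*H" using HF(1) unfolding M by (simp add: algebra_simps diff_mult_distrib)
  have e: "(8*H+1)*2^(4*t+1) = 16*M + 2*H" using e0 HF(3) by simp
  show ?thesis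
    apply (rule nl_direct[where i="4*t+1" and k=1 and v="2*H-1"])
    apply (subst e) using HF(1) HM apply simp
    using HF(1) HM apply linarith+
    done
qed

lemma nl_2:
  fixes t H M :: nat
  assumes t: "1 \<le> t" and H: "H = 2^(4*t)" and M: "M = H*H"
  shows "\<not> coset_leader (16*M+1) (8*H+3)"
proof -
  note HF = Hfacts[OF t H]
  have HM: "16*H \<le> M" unfolding M using HF(1) by (intro mult_le_mono1)
  have e0: "(8*H+3)*(2*H) = 16*M + 6*H" using HF(1) unfolding M by (simp add: algebra_simps diff_mult_distrib)
  have e: "(8*H+3)*2^(4*t+1) = 16*M + 6*H" using e0 HF(3) by simp
  show ?thesis
    apply (rule nl_direct[where i="4*t+1" and k=1 and v="6*H-1"])
    apply (subst e) using HF(1) HM apply simp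
    using HF(1) HM apply linarith+
    done
qed

lemma nl_3:
  fixes t H M :: nat
  assumes t: "1 \<le> t" and H: "H = 2^(4*t)" and M: "M = H*H"
  shows "\<not> coset_leader (16*M+1) (10*H+1)"
proof -
  note HF = Hfacts[OF t H]
  have HM: "16*H \<le> M" unfolding M using HF(1) by (intro mult_le_mono1)
  have e0: "(10*H+1)*(8*H) = 80*M + 8*H" using HF(1) unfolding M by (simp add: algebra_simps diff_mult_distrib)
  have e: "(10*H+1)*2^(4*t+3) = 80*M + 8*H" using e0 HF(5) by simp
  show ?thesis
    apply (rule nl_direct[where i="4*t+3" and k=5 and v="8*H-5"])
    apply (subst e) using HF(1) HM apply simp
    using HF(1) HM apply linarith+
    done
qed

lemma nl_4:
  fixes t H M :: nat
  assumes t: "1 \<le> t" and H: "H = 2^(4*t)" and M: "M = H*H"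
  shows "\<not> coset_leader (16*M+1) (12*H+1)"
proof -
  note HF = Hfacts[OF t H]
  have HM: "16*H \<le> M" unfolding M using HF(1) by (intro mult_le_mono1)
  have e0: "(12*H+1)*(4*H) = 48*M + 4*H" using HF(1) unfolding M by (simp add: algebra_simps diff_mult_distrib)
  have e: "(12*H+1)*2^(4*t+2) = 48*M + 4*H" using e0 HF(4) by simp
  show ?thesis
    apply (rule nl_direct[where i="4*t+2" and k=3 and v="4*H-3"])
    apply (subst e) using HF(1) HM apply simp
    using HF(1) HM apply linarith+
    done
qed

lemma nl_5:
  fixes t H M :: nat
  assumes t: "1 \<le> t" and H: "H = 2^(4*t)" and M: "M = H*H"
  shows "\<not> coset_leader (16*M+1) (12*H+3)"
proof -
  note HF = Hfacts[OF t H]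
  have HM: "16*H \<le> M" unfolding M using HF(1) by (intro mult_le_mono1)
  have e0: "(12*H+3)*(4*H) = 48*M + 12*H" using HF(1) unfolding M by (simp add: algebra_simps diff_mult_distrib)
  have e: "(12*H+3)*2^(4*t+2) = 48*M + 12*H" using e0 HF(4) by simp
  show ?thesis
    apply (rule nl_direct[where i="4*t+2" and k=3 and v="12*H-3"])
    apply (subst e) using HF(1) HM apply simp
    using HF(1) HM apply linarith+
    done
qed

lemma nl_6:
  fixes t H M :: nat
  assumes t: "1 \<le> t" and H: "H = 2^(4*t)" and M: "M = H*H"
  shows "\<not> coset_leader (16*M+1) (14*H+1)"
proof -
  note HF = Hfacts[OF t H]
  have HM: "16*H \<le> M" unfolding M using HF(1) by (intro mult_le_mono1)
  have e0: "(14*H+1)*(8*H) = 112*M + 8*H" using HF(1) unfolding M by (simp add: algebra_simps diff_mult_distrib)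
  have e: "(14*H+1)*2^(4*t+3) = 112*M + 8*H" using e0 HF(5) by simp
  show ?thesis
    apply (rule nl_direct[where i="4*t+3" and k=7 and v="8*H-7"])
    apply (subst e) using HF(1) HM apply simp
    using HF(1) HM apply linarith+
    done
qed

lemma nl_7:
  fixes t H M :: nat
  assumes t: "1 \<le> t" and H: "H = 2^(4*t)" and M: "M = H*H"
  shows "\<not> coset_leader (16*M+1) (8*H-3)"
proof -
  note HF = Hfacts[OF t H]
  have HM: "16*H \<le> M" unfolding M using HF(1) by (intro mult_le_mono1)
  have e0: "(8*H-3)*(2*H) = 16*M - 6*H" using HF(1) unfolding M by (simp add: algebra_simps diff_mult_distrib)
  have e: "(8*H-3)*2^(4*t+1) = 16*M - 6*H" using e0 HF(3) by simp
  show ?thesis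
    apply (rule nl_upper[where i="4*t+1" and k=0 and r="16*M-6*H" and m="8*t+4"])
    using HF(7) M apply simp
    apply (subst e) using HF(1) HM apply simp
    using HF(1) HM apply linarith+
    done
qed

lemma nl_8:
  fixes t H M :: nat
  assumes t: "1 \<le> t" and H: "H = 2^(4*t)" and M: "M = H*H"
  shows "\<not> coset_leader (16*M+1) (8*H-1)"
proof -
  note HF = Hfacts[OF t H]
  have HM: "16*H \<le> M" unfolding M using HF(1) by (intro mult_le_mono1)
  have e0: "(8*H-1)*(2*H) = 16*M - 2*H" using HF(1) unfolding M by (simp add: algebra_simps diff_mult_distrib)
  have e: "(8*H-1)*2^(4*t+1) = 16*M - 2*H" using e0 HF(3) by simp
  show ?thesis
    apply (rule nl_upper[where i="4*t+1" and k=0 and r="16*M-2*H" and m="8*t+4"])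
    using HF(7) M apply simp
    apply (subst e) using HF(1) HM apply simp
    using HF(1) HM apply linarith+
    done
qed

lemma nl_9:
  fixes t H M :: nat
  assumes t: "1 \<le> t" and H: "H = 2^(4*t)" and M: "M = H*H"
  shows "\<not> coset_leader (16*M+1) (10*H-1)"
proof -
  note HF = Hfacts[OF t H]
  have HM: "16*H \<le> M" unfolding M using HF(1) by (intro mult_le_mono1)
  have e0: "(10*H-1)*(8*H) = 80*M - 8*H" using HF(1) unfolding M by (simp add: algebra_simps diff_mult_distrib)
  have e: "(10*H-1)*2^(4*t+3) = 80*M - 8*H" using e0 HF(5) by simp
  show ?thesis
    apply (rule nl_upper[where i="4*t+3" and k=4 and r="16*M-8*H-4" and m="8*t+4"])
    using HF(7) M apply simp
    apply (subst e) using HF(1) HM apply simp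
    using HF(1) HM apply linarith+
    done
qed

lemma nl_10:
  fixes t H M :: nat
  assumes t: "1 \<le> t" and H: "H = 2^(4*t)" and M: "M = H*H"
  shows "\<not> coset_leader (16*M+1) (12*H-1)"
proof -
  note HF = Hfacts[OF t H]
  have HM: "16*H \<le> M" unfolding M using HF(1) by (intro mult_le_mono1)
  have e0: "(12*H-1)*(4*H) = 48*M - 4*H" using HF(1) unfolding M by (simp add: algebra_simps diff_mult_distrib)
  have e: "(12*H-1)*2^(4*t+2) = 48*M - 4*H" using e0 HF(4) by simp
  show ?thesis
    apply (rule nl_upper[where i="4*t+2" and k=2 and r="16*M-4*H-2" and m="8*t+4"])
    using HF(7) M apply simp
    apply (subst e) using HF(1) HM apply simp
    using HF(1) HM apply linarith+
    done
qed

lemma nl_11: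
  fixes t H M :: nat
  assumes t: "1 \<le> t" and H: "H = 2^(4*t)" and M: "M = H*H"
  shows "\<not> coset_leader (16*M+1) (14*H-1)"
proof -
  note HF = Hfacts[OF t H]
  have HM: "16*H \<le> M" unfolding M using HF(1) by (intro mult_le_mono1)
  have e0: "(14*H-1)*(8*H) = 112*M - 8*H" using HF(1) unfolding M by (simp add: algebra_simps diff_mult_distrib)
  have e: "(14*H-1)*2^(4*t+3) = 112*M - 8*H" using e0 HF(5) by simp
  show ?thesis
    apply (rule nl_upper[where i="4*t+3" and k=6 and r="16*M-8*H-6" and m="8*t+4"])
    using HF(7) M apply simp
    apply (subst e) using HF(1) HM apply simp
    using HF(1) HM apply linarith+
    done
qed



theorem theorem5p1:
  fixes t m n x :: nat
  assumes "t \<ge> 1" and "m = 8 * t + 4" and "n = 2 ^ m + 1" and "odd x"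
  shows "(1 \<le> x \<and> x \<le> 2 ^ (4*t+2) - 1 \<longrightarrow> coset_leader n x)
    \<and> (2 ^ (4*t+2) + 3 \<le> x \<and> x \<le> 2 ^ (4*t+3) - 5 \<longrightarrow> coset_leader n x)
    \<and> (2 ^ (4*t+3) + 5 \<le> x \<and> x \<le> 2 ^ (4*t+3) + 2 ^ (4*t+1) - 3 \<longrightarrow> coset_leader n x)
    \<and> (2 ^ (4*t+3) + 2 ^ (4*t+1) + 3 \<le> x \<and> x \<le> 2 ^ (4*t+3) + 2 ^ (4*t+2) - 3
         \<longrightarrow> coset_leader n x)
    \<and> (2 ^ (4*t+3) + 2 ^ (4*t+2) + 5 \<le> x
         \<and> x \<le> 2 ^ (4*t+3) + 2 ^ (4*t+2) + 2 ^ (4*t+1) - 3 \<longrightarrow> coset_leader n x)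
    \<and> (x = 2 ^ (4*t+2) + 1
       \<or> (2 ^ (4*t+3) - 3 \<le> x \<and> x \<le> 2 ^ (4*t+3) + 3)
       \<or> (2 ^ (4*t+3) + 2 ^ (4*t+1) - 1 \<le> x \<and> x \<le> 2 ^ (4*t+3) + 2 ^ (4*t+1) + 1)
       \<or> (2 ^ (4*t+3) + 2 ^ (4*t+2) - 1 \<le> x \<and> x \<le> 2 ^ (4*t+3) + 2 ^ (4*t+2) + 3)
       \<or> (2 ^ (4*t+3) + 2 ^ (4*t+2) + 2 ^ (4*t+1) - 1 \<le> x
           \<and> x \<le> 2 ^ (4*t+3) + 2 ^ (4*t+2) + 2 ^ (4*t+1) + 1)
       \<longrightarrow> \<not> coset_leader n x)"
proof -
  define H where "H = (2::nat)^(4*t)"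
  define M where "M = H*H"
  have t: "1 \<le> t" using assms(1) by simp
  note HF = Hfacts[OF t H_def]
  have n: "n = 16*M+1" using assms(2,3) HF(7) M_def by simp
  note L = leader_main[OF t H_def M_def assms(4)]
  show ?thesis unfolding HF(3) HF(4) HF(5) n
  proof (intro conjI impI)
    assume r: "1 \<le> x \<and> x \<le> 4*H - 1"
    show "coset_leader (16*M+1) x" by (rule L) (use r HF(1) in linarith)+
  next
    assume r: "4*H + 3 \<le> x \<and> x \<le> 8*H - 5"
    show "coset_leader (16*M+1) x" by (rule L) (use r HF(1) in linarith)+
  next
    assume r: "8*H + 5 \<le> x \<and> x \<le> 8*H + 2*H - 3"
    show "coset_leader (16*M+1) x" by (rule L) (use r HF(1) in linarith)+
  next
    assume r: "8*H + 2*H + 3 \<le> x \<and> x \<le> 8*H + 4*H - 3"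
    show "coset_leader (16*M+1) x" by (rule L) (use r HF(1) in linarith)+
  next
    assume r: "8*H + 4*H + 5 \<le> x \<and> x \<le> 8*H + 4*H + 2*H - 3"
    show "coset_leader (16*M+1) x" by (rule L) (use r HF(1) in linarith)+
  next
    assume r: "x = 4*H + 1
       \<or> (8*H - 3 \<le> x \<and> x \<le> 8*H + 3)
       \<or> (8*H + 2*H - 1 \<le> x \<and> x \<le> 8*H + 2*H + 1)
       \<or> (8*H + 4*H - 1 \<le> x \<and> x \<le> 8*H + 4*H + 3)
       \<or> (8*H + 4*H + 2*H - 1 \<le> x \<and> x \<le> 8*H + 4*H + 2*H + 1)"
    have "x = 4*H+1 \<or> x = 8*H-3 \<or> x = 8*H-1 \<or> x = 8*H+1 \<or> x = 8*H+3
      \<or> x = 10*H-1 \<or> x = 10*H+1 \<or> x = 12*H-1 \<or> x = 12*H+1 \<or> x = 12*H+3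
      \<or> x = 14*H-1 \<or> x = 14*H+1"
    proof -
      have p: "odd x" "16 \<le> H" using assms(4) HF(1) by simp_all
      from r show ?thesis
      proof (elim disjE conjE)
        assume "8*H - 3 \<le> x" "x \<le> 8*H + 3"
        hence "x = 8*H-3 \<or> x = 8*H-1 \<or> x = 8*H+1 \<or> x = 8*H+3" using p by presburger
        thus ?thesis by blast
      next
        assume "8*H + 2*H - 1 \<le> x" "x \<le> 8*H + 2*H + 1"
        hence "x = 10*H-1 \<or> x = 10*H+1" using p by presburger
        thus ?thesis by blast
      next
        assume "8*H + 4*H - 1 \<le> x" "x \<le> 8*H + 4*H + 3"
        hence "x = 12*H-1 \<or> x = 12*H+1 \<or> x = 12*H+3" using p by presburger
        thus ?thesis by blast
      next
        assume "8*H + 4*H + 2*H - 1 \<le> x" "x \<le> 8*H + 4*H + 2*H + 1"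
        hence "x = 14*H-1 \<or> x = 14*H+1" using p by presburger
        thus ?thesis by blast
      qed simp
    qed
    then show "\<not> coset_leader (16*M+1) x"
      using nl_0[OF t H_def M_def] nl_1[OF t H_def M_def] nl_2[OF t H_def M_def]
        nl_3[OF t H_def M_def] nl_4[OF t H_def M_def] nl_5[OF t H_def M_def]
        nl_6[OF t H_def M_def] nl_7[OF t H_def M_def] nl_8[OF t H_def M_def]
        nl_9[OF t H_def M_def] nl_10[OF t H_def M_def] nl_11[OF t H_def M_def]
      by (elim disjE) simp_all
  qed
qed


end
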